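(* Let $G$ be a finite connected graph with a fixed normal orientation $\varepsilon$ and a fixed total order on $E(G)$, and let $e=uv$ be the largest edge of $G$, assumed not to be a loop. Let $\varepsilon_1\neq\varepsilon_2$ be two reduced totally cyclic orientations of $G$ such that $e$ is cycle flippable neither with respect to $\varepsilon_1$ nor with respect to $\varepsilon_2$. Let $\varepsilon_1',\varepsilon_2'$ be the orientations of the contracted graph $G/e$ induced by $\varepsilon_1,\varepsilon_2$. Then $\varepsilon_1'$ and $\varepsilon_2'$ are not Eulerian equivalent.
   Context: An orientation assigns a direction to each edge; it is totally cyclic if every edge lies on a directed cycle. Two orientations $\varepsilon_1,\varepsilon_2$ of a graph are Eulerian equivalent if the spanning subgraph formed by the edges on which they differ, oriented by $\varepsilon_1$, has in-degree equal to out-degree at every vertex. Given the normal orientation $\varepsilon$ and the total order, an orientation $\varepsilon'$ is reduced if for every edge $f$, either $\varepsilon'(f)=\varepsilon(f)$, or there is no cycle that is directed with respect to $\varepsilon'$, contains $f$, and has all its other edges smaller than $f$. An edge $e$ with endpoints $u,v$ is cycle flippable with respect to an orientation if in $G-e$ (with the induced orientation) there are directed paths both from $u$ to $v$ and from $v$ to $u$. *)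

theory Defs
  imports Main
begin

(* A finite multigraph (loops and parallel edges allowed) is given by a vertex set V,
   an edge set E and two maps s t :: 'e => 'v.  The pair (s f, t f) encodes the fixed
   normal (reference) orientation epsilon: under epsilon, f goes from s f to t f.
   An orientation is a map ori :: 'e => bool; ori f = True means f is oriented as in
   epsilon, ori f = False means it is reversed.  The total order on E(G) is the
   linorder of the edge type. *)

definition otail :: "('e \<Rightarrow> 'v) \<Rightarrow> ('e \<Rightarrow> 'v) \<Rightarrow> ('e \<Rightarrow> bool) \<Rightarrow> 'e \<Rightarrow> 'v" where
  "otail s t ori f = (if ori f then s f else t f)"

definition ohead :: "('e \<Rightarrow> 'v) \<Rightarrow> ('e \<Rightarrow> 'v) \<Rightarrow> ('e \<Rightarrow> bool) \<Rightarrow> 'e \<Rightarrow> 'v" where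
  "ohead s t ori f = (if ori f then t f else s f)"

definition graph :: "'v set \<Rightarrow> 'e set \<Rightarrow> ('e \<Rightarrow> 'v) \<Rightarrow> ('e \<Rightarrow> 'v) \<Rightarrow> bool" where
  "graph V E s t \<longleftrightarrow> finite V \<and> finite E \<and> (\<forall>f\<in>E. s f \<in> V \<and> t f \<in> V)"

definition connected_graph :: "'v set \<Rightarrow> 'e set \<Rightarrow> ('e \<Rightarrow> 'v) \<Rightarrow> ('e \<Rightarrow> 'v) \<Rightarrow> bool" where
  "connected_graph V E s t \<longleftrightarrow>
     (\<forall>x\<in>V. \<forall>y\<in>V. (x, y) \<in> (\<Union>f\<in>E. {(s f, t f), (t f, s f)})\<^sup>*)"

definition dir_cycle :: "'e set \<Rightarrow> ('e \<Rightarrow> 'v) \<Rightarrow> ('e \<Rightarrow> 'v) \<Rightarrow> ('e \<Rightarrow> bool) \<Rightarrow> 'e list \<Rightarrow> bool" where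
  "dir_cycle E s t ori C \<longleftrightarrow> C \<noteq> [] \<and> distinct C \<and> set C \<subseteq> E \<and>
     (\<forall>i<length C. ohead s t ori (C ! i) = otail s t ori (C ! ((i + 1) mod length C))) \<and>
     distinct (map (otail s t ori) C)"

definition totally_cyclic :: "'e set \<Rightarrow> ('e \<Rightarrow> 'v) \<Rightarrow> ('e \<Rightarrow> 'v) \<Rightarrow> ('e \<Rightarrow> bool) \<Rightarrow> bool" where
  "totally_cyclic E s t ori \<longleftrightarrow> (\<forall>f\<in>E. \<exists>C. dir_cycle E s t ori C \<and> f \<in> set C)"

definition reduced :: "'e::linorder set \<Rightarrow> ('e \<Rightarrow> 'v) \<Rightarrow> ('e \<Rightarrow> 'v) \<Rightarrow> ('e \<Rightarrow> bool) \<Rightarrow> bool" where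
  "reduced E s t ori \<longleftrightarrow> (\<forall>f\<in>E. ori f \<or>
     \<not> (\<exists>C. dir_cycle E s t ori C \<and> f \<in> set C \<and> (\<forall>g\<in>set C. g \<noteq> f \<longrightarrow> g < f)))"

definition eulerian_equiv :: "'v set \<Rightarrow> 'e set \<Rightarrow> ('e \<Rightarrow> 'v) \<Rightarrow> ('e \<Rightarrow> 'v) \<Rightarrow> ('e \<Rightarrow> bool) \<Rightarrow> ('e \<Rightarrow> bool) \<Rightarrow> bool" where
  "eulerian_equiv V E s t o1 o2 \<longleftrightarrow>
     (let D = {f\<in>E. o1 f \<noteq> o2 f} in
      \<forall>v\<in>V. card {f\<in>D. ohead s t o1 f = v} = card {f\<in>D. otail s t o1 f = v})"

definition arcs :: "'e set \<Rightarrow> ('e \<Rightarrow> 'v) \<Rightarrow> ('e \<Rightarrow> 'v) \<Rightarrow> ('e \<Rightarrow> bool) \<Rightarrow> ('v \<times> 'v) set" where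
  "arcs E s t ori = {(otail s t ori f, ohead s t ori f) | f. f \<in> E}"

definition cycle_flippable :: "'e set \<Rightarrow> ('e \<Rightarrow> 'v) \<Rightarrow> ('e \<Rightarrow> 'v) \<Rightarrow> ('e \<Rightarrow> bool) \<Rightarrow> 'e \<Rightarrow> bool" where
  "cycle_flippable E s t ori e \<longleftrightarrow>
     (s e, t e) \<in> (arcs (E - {e}) s t ori)\<^sup>* \<and> (t e, s e) \<in> (arcs (E - {e}) s t ori)\<^sup>*"

(* contraction G/e: the endpoint t e is identified with s e; edges E - {e}
   keep their (induced) endpoints and orientation values *)
definition cmerge :: "('e \<Rightarrow> 'v) \<Rightarrow> ('e \<Rightarrow> 'v) \<Rightarrow> 'e \<Rightarrow> 'v \<Rightarrow> 'v" where
  "cmerge s t e v = (if v = t e then s e else v)"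

end

theory Submission
  imports Defs
begin

fun epath :: "('e \<Rightarrow> 'v) \<Rightarrow> ('e \<Rightarrow> 'v) \<Rightarrow> ('e \<Rightarrow> bool) \<Rightarrow> 'v \<Rightarrow> 'e list \<Rightarrow> 'v \<Rightarrow> bool" where
  "epath s t p x [] y = (x = y)"
| "epath s t p x (g#L) y = (otail s t p g = x \<and> epath s t p (ohead s t p g) L y)"

lemma epath_append: "epath s t p x (A@B) y \<longleftrightarrow> (\<exists>z. epath s t p x A z \<and> epath s t p z B y)"
  by (induction A arbitrary: x) auto

lemma arcs_mono: "A \<subseteq> B \<Longrightarrow> arcs A s t p \<subseteq> arcs B s t p"
  unfolding arcs_def by auto

lemma epath_rtrancl: "epath s t p x L y \<Longrightarrow> (x,y) \<in> (arcs (set L) s t p)\<^sup>*"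
proof (induction L arbitrary: x)
  case Nil then show ?case by simp
next
  case (Cons g L)
  then have 1: "(x, ohead s t p g) \<in> arcs (set (g#L)) s t p" unfolding arcs_def by auto
  have "(ohead s t p g, y) \<in> (arcs (set L) s t p)\<^sup>*" using Cons by auto
  also have "\<dots> \<subseteq> (arcs (set (g#L)) s t p)\<^sup>*" by (rule rtrancl_mono, rule arcs_mono) auto
  finally show ?case using 1 by (meson converse_rtrancl_into_rtrancl)
qed

lemma rtrancl_epath: "(x,y) \<in> (arcs D s t p)\<^sup>* \<Longrightarrow> \<exists>L. set L \<subseteq> D \<and> epath s t p x L y"
proof (induction rule: rtrancl_induct)
  case base
  then show ?case by (intro exI[of _ "[]"]) auto
next
  case (step y z)
  then obtain L where L: "set L \<subseteq> D" "epath s t p x L y" by auto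
  from step(2) obtain g where g: "g \<in> D" "y = otail s t p g" "z = ohead s t p g"
    unfolding arcs_def by auto
  show ?case using L g by (intro exI[of _ "L @ [g]"]) (auto simp: epath_append)
qed

lemma epath_short: "epath s t p x L y \<Longrightarrow> \<exists>L'. epath s t p x L' y \<and> set L' \<subseteq> set L \<and>
   distinct (map (otail s t p) L') \<and> y \<notin> otail s t p ` set L'"
proof (induction L arbitrary: x)
  case Nil then show ?case by (intro exI[of _ "[]"]) auto
next
  case (Cons g L)
  then have tg: "otail s t p g = x" and ep: "epath s t p (ohead s t p g) L y" by auto
  from Cons.IH[OF ep] obtain L1 where L1: "epath s t p (ohead s t p g) L1 y" "set L1 \<subseteq> set L"
    "distinct (map (otail s t p) L1)" "y \<notin> otail s t p ` set L1" by blast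
  show ?case
  proof (cases "x = y")
    case True then show ?thesis by (intro exI[of _ "[]"]) auto
  next
    case False
    show ?thesis
    proof (cases "x \<in> otail s t p ` set L1")
      case True
      then obtain h where h: "h \<in> set L1" "otail s t p h = x" by auto
      then obtain A B where AB: "L1 = A @ h # B" by (meson split_list)
      from L1(1) AB obtain z where "epath s t p z (h#B) y" by (auto simp: epath_append)
      then have e2: "epath s t p x (h#B) y" using h by auto
      show ?thesis
        using e2 L1 AB by (intro exI[of _ "h#B"]) auto
    next
      case False
      show ?thesis using False L1 tg \<open>x \<noteq> y\<close> by (intro exI[of _ "g#L1"]) auto
    qed
  qed
qed

lemma epath_nth: "epath s t p x L y \<Longrightarrow> i < length L \<Longrightarrow>
   ohead s t p (L!i) = (if Suc i < length L then otail s t p (L ! Suc i) else y)"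
proof (induction L arbitrary: x i)
  case Nil then show ?case by simp
next
  case (Cons g L)
  show ?case
  proof (cases i)
    case 0
    then show ?thesis using Cons by (cases L) auto
  next
    case (Suc j)
    then show ?thesis using Cons.IH[of "ohead s t p g" j] Cons.prems by auto
  qed
qed

lemma nth_epath: "(\<forall>i. Suc i < length L \<longrightarrow> ohead s t p (L!i) = otail s t p (L!Suc i)) \<Longrightarrow> L \<noteq> [] \<Longrightarrow>
   epath s t p (otail s t p (L!0)) L (ohead s t p (last L))"
proof (induction L)
  case Nil then show ?case by simp
next
  case (Cons g L)
  show ?case
  proof (cases "L = []")
    case True then show ?thesis by simp
  next
    case False
    have h0: "ohead s t p g = otail s t p (L!0)" using Cons.prems(1)[rule_format, of 0] False by simp
    have "\<forall>i. Suc i < length L \<longrightarrow> ohead s t p (L!i) = otail s t p (L!Suc i)"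
    proof (intro allI impI)
      fix i assume "Suc i < length L"
      then show "ohead s t p (L!i) = otail s t p (L!Suc i)"
        using Cons.prems(1)[rule_format, of "Suc i"] by simp
    qed
    then have "epath s t p (otail s t p (L!0)) L (ohead s t p (last L))" using Cons.IH False by blast
    then show ?thesis using h0 False by simp
  qed
qed

lemma cycle_from_path:
  assumes "f \<in> D" "D \<subseteq> E" "epath s t p (ohead s t p f) L (otail s t p f)" "set L \<subseteq> D"
  shows "\<exists>C. dir_cycle E s t p C \<and> f \<in> set C \<and> set C \<subseteq> D"
proof -
  obtain L' where L': "epath s t p (ohead s t p f) L' (otail s t p f)" "set L' \<subseteq> set L"
    "distinct (map (otail s t p) L')" "otail s t p f \<notin> otail s t p ` set L'"
    using epath_short[OF assms(3)] by blast
  define C where "C = f # L'"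
  have ep: "epath s t p (otail s t p f) C (otail s t p f)" using L' C_def by simp
  have dm: "distinct (map (otail s t p) C)" using L' C_def by auto
  have "dir_cycle E s t p C" unfolding dir_cycle_def
  proof (intro conjI allI impI)
    show "C \<noteq> []" using C_def by simp
    show "distinct C" using dm distinct_map by blast
    show "set C \<subseteq> E" using C_def L' assms by auto
    show "distinct (map (otail s t p) C)" by fact
  next
    fix i assume i: "i < length C"
    have "ohead s t p (C!i) = (if Suc i < length C then otail s t p (C ! Suc i) else otail s t p f)"
      using epath_nth[OF ep i] .
    moreover have "(i + 1) mod length C = (if Suc i < length C then Suc i else 0)" using i
    proof (cases "Suc i < length C")
      case False then have "Suc i = length C" using i by simp
      then show ?thesis by simp
    qed simp
    ultimately show "ohead s t p (C ! i) = otail s t p (C ! ((i + 1) mod length C))"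
      using C_def by auto
  qed
  moreover have "f \<in> set C" "set C \<subseteq> D" using C_def L' assms by auto
  ultimately show ?thesis by blast
qed

lemma dir_cycle_epath:
  assumes "dir_cycle E s t p C"
  shows "epath s t p (otail s t p (C!0)) C (otail s t p (C!0))"
proof -
  have ne: "C \<noteq> []" using assms unfolding dir_cycle_def by auto
  have c: "\<forall>i<length C. ohead s t p (C ! i) = otail s t p (C ! ((i + 1) mod length C))"
    using assms unfolding dir_cycle_def by auto
  have 1: "\<forall>i. Suc i < length C \<longrightarrow> ohead s t p (C!i) = otail s t p (C!Suc i)"
    using c by auto
  have "ohead s t p (C!(length C - 1)) = otail s t p (C!0)"
    using c[rule_format, of "length C - 1"] ne by simp
  then have "ohead s t p (last C) = otail s t p (C!0)" using ne by (simp add: last_conv_nth)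
  then show ?thesis using nth_epath[OF 1 ne] by simp
qed

lemma rotate_reach:
  assumes "dir_cycle E s t p C" "g \<in> set C"
  shows "(ohead s t p g, otail s t p g) \<in> (arcs (set C - {g}) s t p)\<^sup>*"
proof -
  have ep: "epath s t p (otail s t p (C!0)) C (otail s t p (C!0))" using dir_cycle_epath[OF assms(1)] .
  have dC: "distinct C" using assms unfolding dir_cycle_def by auto
  obtain A B where AB: "C = A @ g # B" using assms(2) by (meson split_list)
  from ep AB obtain z where z: "epath s t p (otail s t p (C!0)) A z" "epath s t p z (g#B) (otail s t p (C!0))"
    by (auto simp: epath_append)
  then have "epath s t p (ohead s t p g) (B @ A) (otail s t p g)"
    by (auto simp: epath_append)
  then have "(ohead s t p g, otail s t p g) \<in> (arcs (set (B@A)) s t p)\<^sup>*" by (rule epath_rtrancl)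
  also have "\<dots> \<subseteq> (arcs (set C - {g}) s t p)\<^sup>*"
    by (rule rtrancl_mono, rule arcs_mono) (use dC AB in auto)
  finally show ?thesis .
qed

lemma euler_reach:
  assumes "finite D" "f \<in> D" "finite W" "\<forall>g\<in>D. hd' g \<in> W \<and> tl' g \<in> W"
    "\<forall>w\<in>W. card {g\<in>D. hd' g = w} = card {g\<in>D. tl' g = w}"
  shows "(hd' f, tl' f) \<in> {(tl' g, hd' g) | g. g\<in>D}\<^sup>*"
proof (rule ccontr)
  let ?A = "{(tl' g, hd' g) | g. g\<in>D}"
  assume nr: "(hd' f, tl' f) \<notin> ?A\<^sup>*"
  define R where "R = {w\<in>W. (hd' f, w) \<in> ?A\<^sup>*}"
  have finR: "finite R" using assms(3) R_def by simp
  have cardsum: "card {g\<in>D. k g \<in> R} = (\<Sum>w\<in>R. card {g\<in>D. k g = w})" for k :: "_ \<Rightarrow> _"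
  proof -
    have "{g\<in>D. k g \<in> R} = (\<Union>w\<in>R. {g\<in>D. k g = w})" by auto
    moreover have "card (\<Union>w\<in>R. {g\<in>D. k g = w}) = (\<Sum>w\<in>R. card {g\<in>D. k g = w})"
      by (rule card_UN_disjoint) (use finR assms(1) in auto)
    ultimately show ?thesis by simp
  qed
  have eq: "card {g\<in>D. hd' g \<in> R} = card {g\<in>D. tl' g \<in> R}"
    unfolding cardsum by (rule sum.cong) (use assms(5) R_def in auto)
  have sub: "{g\<in>D. tl' g \<in> R} \<subseteq> {g\<in>D. hd' g \<in> R}"
  proof
    fix g assume g: "g \<in> {g\<in>D. tl' g \<in> R}"
    then have "(hd' f, tl' g) \<in> ?A\<^sup>*" "(tl' g, hd' g) \<in> ?A" using R_def by auto
    then have "(hd' f, hd' g) \<in> ?A\<^sup>*" by (meson rtrancl_into_rtrancl)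
    then show "g \<in> {g\<in>D. hd' g \<in> R}" using g assms(4) R_def by auto
  qed
  have "f \<in> {g\<in>D. hd' g \<in> R}" using assms(2,4) R_def by auto
  moreover have "f \<notin> {g\<in>D. tl' g \<in> R}" using nr R_def by auto
  ultimately have "{g\<in>D. tl' g \<in> R} \<subset> {g\<in>D. hd' g \<in> R}" using sub by blast
  then have "card {g\<in>D. tl' g \<in> R} < card {g\<in>D. hd' g \<in> R}"
    by (rule psubset_card_mono[rotated]) (use assms(1) in auto)
  then show False using eq by simp
qed

lemma jump_cases:
  assumes "(x,y) \<in> (A \<union> {(u,v),(v,u)})\<^sup>*"
  shows "(x,y) \<in> A\<^sup>* \<or> ((x,u)\<in>A\<^sup>* \<and> (v,y) \<in> A\<^sup>*) \<or> ((x,v)\<in>A\<^sup>* \<and> (u,y)\<in>A\<^sup>*)"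
  using assms
proof (induction rule: rtrancl_induct)
  case base then show ?case by simp
next
  case (step y z)
  show ?case using step(2,3)
    by (auto intro: rtrancl_into_rtrancl)
qed

lemma ot_cm: "otail (cmerge s t e \<circ> s) (cmerge s t e \<circ> t) p g = cmerge s t e (otail s t p g)"
  and oh_cm: "ohead (cmerge s t e \<circ> s) (cmerge s t e \<circ> t) p g = cmerge s t e (ohead s t p g)"
  by (simp_all add: otail_def ohead_def)

lemma lift:
  assumes "(x', y') \<in> (arcs D (cmerge s t e \<circ> s) (cmerge s t e \<circ> t) p)\<^sup>*" "cmerge s t e x = x'"
  shows "\<exists>y. cmerge s t e y = y' \<and> (x,y) \<in> (arcs D s t p \<union> {(s e,t e),(t e,s e)})\<^sup>*"
  using assms
proof (induction rule: rtrancl_induct)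
  case base then show ?case by auto
next
  case (step y' z')
  from step(2) obtain g where g: "g \<in> D" "y' = cmerge s t e (otail s t p g)"
    "z' = cmerge s t e (ohead s t p g)"
    unfolding arcs_def ot_cm oh_cm by auto
  from step obtain y where y: "cmerge s t e y = y'"
    "(x,y) \<in> (arcs D s t p \<union> {(s e,t e),(t e,s e)})\<^sup>*" by auto
  have "(y, otail s t p g) \<in> (arcs D s t p \<union> {(s e,t e),(t e,s e)})\<^sup>="
    using y(1) g(2) by (auto simp: cmerge_def split: if_splits)
  then have "(x, otail s t p g) \<in> (arcs D s t p \<union> {(s e,t e),(t e,s e)})\<^sup>*"
    using y(2) by (auto intro: rtrancl_into_rtrancl)
  moreover have "(otail s t p g, ohead s t p g) \<in> arcs D s t p \<union> {(s e,t e),(t e,s e)}"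
    using g unfolding arcs_def by auto
  ultimately have "(x, ohead s t p g) \<in> (arcs D s t p \<union> {(s e,t e),(t e,s e)})\<^sup>*"
    by (meson rtrancl_into_rtrancl)
  then show ?case using g by blast
qed

lemma arcs_conv: "\<forall>g\<in>D. p g \<noteq> q g \<Longrightarrow> arcs D s t p = (arcs D s t q)\<inverse>"
proof -
  assume a: "\<forall>g\<in>D. p g \<noteq> q g"
  have "otail s t p g = ohead s t q g \<and> ohead s t p g = otail s t q g" if "g \<in> D" for g
    using a that unfolding otail_def ohead_def by auto
  then show ?thesis unfolding arcs_def by force
qed


lemma main:
  assumes gr: "graph V E s t" and eE: "e \<in> E" and emax: "\<forall>f\<in>E. f \<le> e" and ne: "s e \<noteq> t e"
    and tcp: "totally_cyclic E s t p" and redp: "reduced E s t p" and tcq: "totally_cyclic E s t q"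
    and nfp: "\<not> cycle_flippable E s t p e" and nfq: "\<not> cycle_flippable E s t q e"
    and pe: "p e" and qe: "q e"
    and D_def: "D = {g \<in> E - {e}. p g \<noteq> q g}" and fD: "f \<in> D" and fmax: "\<forall>g\<in>D. g \<le> f"
    and pf: "\<not> p f"
    and eul: "\<forall>w\<in>cmerge s t e ` V. card {g\<in>D. ohead (cmerge s t e \<circ> s) (cmerge s t e \<circ> t) p g = w}
                 = card {g\<in>D. otail (cmerge s t e \<circ> s) (cmerge s t e \<circ> t) p g = w}"
  shows False
proof -
  let ?cm = "cmerge s t e"
  let ?A = "arcs D s t p"
  let ?J = "{(s e,t e),(t e,s e)}"
  define a where "a = otail s t p f"
  define b where "b = ohead s t p f"
  have finE: "finite E" "finite V" and inV: "\<forall>g\<in>E. s g \<in> V \<and> t g \<in> V"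
    using gr unfolding graph_def by auto
  have finD: "finite D" using finE D_def by auto
  have DE: "D \<subseteq> E - {e}" using D_def by auto
  have "(ohead (?cm \<circ> s) (?cm \<circ> t) p f, otail (?cm \<circ> s) (?cm \<circ> t) p f)
      \<in> {(otail (?cm \<circ> s) (?cm \<circ> t) p g, ohead (?cm \<circ> s) (?cm \<circ> t) p g) | g. g\<in>D}\<^sup>*"
  proof (rule euler_reach[OF finD fD, of "?cm ` V" "ohead (?cm \<circ> s) (?cm \<circ> t) p" "otail (?cm \<circ> s) (?cm \<circ> t) p"])
    show "finite (?cm ` V)" using finE by simp
    show "\<forall>g\<in>D. ohead (?cm \<circ> s) (?cm \<circ> t) p g \<in> ?cm ` V \<and> otail (?cm \<circ> s) (?cm \<circ> t) p g \<in> ?cm ` V"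
    proof
      fix g assume "g \<in> D"
      then have "s g \<in> V" "t g \<in> V" using inV DE by auto
      then show "ohead (?cm \<circ> s) (?cm \<circ> t) p g \<in> ?cm ` V \<and> otail (?cm \<circ> s) (?cm \<circ> t) p g \<in> ?cm ` V"
        unfolding ot_cm oh_cm by (simp add: otail_def ohead_def)
    qed
  qed (use eul in blast)
  then have "(?cm b, ?cm a) \<in> (arcs D (?cm \<circ> s) (?cm \<circ> t) p)\<^sup>*"
    unfolding arcs_def ot_cm oh_cm a_def b_def .
  from lift[OF this refl] obtain y where y: "?cm y = ?cm a" "(b,y) \<in> (?A \<union> ?J)\<^sup>*" by blast
  have "(y, a) \<in> (?A \<union> ?J)\<^sup>=" using y(1) by (auto simp: cmerge_def split: if_splits)
  then have "(b, a) \<in> (?A \<union> ?J)\<^sup>*" using y(2) by (auto intro: rtrancl_into_rtrancl)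
  then have cs: "(b,a) \<in> ?A\<^sup>* \<or> ((b,s e)\<in>?A\<^sup>* \<and> (t e,a) \<in> ?A\<^sup>*) \<or> ((b,t e)\<in>?A\<^sup>* \<and> (s e,a)\<in>?A\<^sup>*)"
    by (rule jump_cases)
  have fa: "(a,b) \<in> ?A" using fD unfolding arcs_def a_def b_def by auto
  have AE: "(?A)\<^sup>* \<subseteq> (arcs (E - {e}) s t p)\<^sup>*" by (rule rtrancl_mono, rule arcs_mono) (use DE in auto)
  have cyc: "(t e, s e) \<in> (arcs (E - {e}) s t r)\<^sup>*" if tcr: "totally_cyclic E s t r" and re: "r e" for r
  proof -
    obtain C where C: "dir_cycle E s t r C" "e \<in> set C" using tcr eE unfolding totally_cyclic_def by blast
    have "(ohead s t r e, otail s t r e) \<in> (arcs (set C - {e}) s t r)\<^sup>*" by (rule rotate_reach[OF C])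
    also have "\<dots> \<subseteq> (arcs (E - {e}) s t r)\<^sup>*" by (rule rtrancl_mono, rule arcs_mono)
        (use C(1) in \<open>unfold dir_cycle_def, blast\<close>)
    finally show ?thesis using re by (simp add: otail_def ohead_def)
  qed
  from cs show False
  proof (elim disjE conjE)
    assume ba: "(b,a) \<in> ?A\<^sup>*"
    obtain L where L: "set L \<subseteq> D" "epath s t p b L a" using rtrancl_epath[OF ba] by blast
    have DE': "D \<subseteq> E" using DE by blast
    have L2: "epath s t p (ohead s t p f) L (otail s t p f)" using L(2) unfolding a_def b_def .
    obtain C where C: "dir_cycle E s t p C" "f \<in> set C" "set C \<subseteq> D"
      using cycle_from_path[OF fD DE' L2 L(1)] by blast
    have lt: "\<forall>g\<in>set C. g \<noteq> f \<longrightarrow> g < f"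
    proof (intro ballI impI)
      fix g assume "g \<in> set C" "g \<noteq> f"
      then have "g \<le> f" using C(3) fmax by blast
      then show "g < f" using \<open>g \<noteq> f\<close> by simp
    qed
    have "f \<in> E" using fD DE by blast
    then have "p f \<or> \<not> (\<exists>C. dir_cycle E s t p C \<and> f \<in> set C \<and> (\<forall>g\<in>set C. g \<noteq> f \<longrightarrow> g < f))"
      using redp unfolding reduced_def by blast
    then have "\<not> (\<exists>C. dir_cycle E s t p C \<and> f \<in> set C \<and> (\<forall>g\<in>set C. g \<noteq> f \<longrightarrow> g < f))"
      using pf by simp
    moreover have "\<exists>C. dir_cycle E s t p C \<and> f \<in> set C \<and> (\<forall>g\<in>set C. g \<noteq> f \<longrightarrow> g < f)"
      using C(1,2) lt by blast
    ultimately show False by contradiction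
  next
    assume 1: "(b,s e)\<in>?A\<^sup>*" "(t e,a) \<in> ?A\<^sup>*"
    have "(t e, b) \<in> ?A\<^sup>*" using 1(2) fa by (rule rtrancl_into_rtrancl)
    then have te: "(t e, s e) \<in> ?A\<^sup>*" using 1(1) by (rule rtrancl_trans)
    have AA: "?A = (arcs D s t q)\<inverse>" by (rule arcs_conv) (use D_def in blast)
    have "(t e, s e) \<in> ((arcs D s t q)\<inverse>)\<^sup>*" using te unfolding AA .
    then have "(s e, t e) \<in> (arcs D s t q)\<^sup>*" by (rule rtrancl_converseD)
    also have "\<dots> \<subseteq> (arcs (E - {e}) s t q)\<^sup>*" by (rule rtrancl_mono, rule arcs_mono) (use DE in auto)
    finally have "(s e, t e) \<in> (arcs (E - {e}) s t q)\<^sup>*" .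
    then have "cycle_flippable E s t q e" using cyc[OF tcq qe] unfolding cycle_flippable_def by (rule conjI)
    then show False using nfq by contradiction
  next
    assume 1: "(b,t e)\<in>?A\<^sup>*" "(s e,a) \<in> ?A\<^sup>*"
    have "(s e, b) \<in> ?A\<^sup>*" using 1(2) fa by (rule rtrancl_into_rtrancl)
    then have "(s e, t e) \<in> ?A\<^sup>*" using 1(1) by (rule rtrancl_trans)
    then have "(s e, t e) \<in> (arcs (E - {e}) s t p)\<^sup>*" using AE by (rule subsetD[rotated])
    then have "cycle_flippable E s t p e" using cyc[OF tcp pe] unfolding cycle_flippable_def by (rule conjI)
    then show False using nfp by contradiction
  qed
qed

lemma e_pos:
  assumes "e \<in> E" "\<forall>f\<in>E. f \<le> e" "totally_cyclic E s t p" "reduced E s t p"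
  shows "p e"
proof -
  obtain C where C: "dir_cycle E s t p C" "e \<in> set C" using assms unfolding totally_cyclic_def by blast
  have lt: "\<forall>g\<in>set C. g \<noteq> e \<longrightarrow> g < e"
  proof (intro ballI impI)
    fix g assume "g \<in> set C" "g \<noteq> e"
    then have "g \<le> e" using C assms(2) unfolding dir_cycle_def by blast
    then show "g < e" using \<open>g \<noteq> e\<close> by simp
  qed
  have "p e \<or> \<not> (\<exists>C. dir_cycle E s t p C \<and> e \<in> set C \<and> (\<forall>g\<in>set C. g \<noteq> e \<longrightarrow> g < e))"
    using assms(1,4) unfolding reduced_def by blast
  then show ?thesis using C lt by blast
qed

lemma oh_swap: "p g \<noteq> q g \<Longrightarrow> ohead s t q g = otail s t p g"
  and ot_swap: "p g \<noteq> q g \<Longrightarrow> otail s t q g = ohead s t p g"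
  unfolding otail_def ohead_def by auto

theorem lemma4:
  fixes V :: "'v set" and E :: "'e::linorder set" and s t :: "'e \<Rightarrow> 'v"
    and e :: 'e and o1 o2 :: "'e \<Rightarrow> bool"
  assumes "graph V E s t"
    and "connected_graph V E s t"
    and "e \<in> E" and "\<forall>f\<in>E. f \<le> e"
    and "s e \<noteq> t e"
    and "totally_cyclic E s t o1" and "reduced E s t o1"
    and "totally_cyclic E s t o2" and "reduced E s t o2"
    and "\<exists>f\<in>E. o1 f \<noteq> o2 f"
    and "\<not> cycle_flippable E s t o1 e" and "\<not> cycle_flippable E s t o2 e"
  shows "\<not> eulerian_equiv (cmerge s t e ` V) (E - {e})
            (cmerge s t e \<circ> s) (cmerge s t e \<circ> t) o1 o2"
proof
  assume eq: "eulerian_equiv (cmerge s t e ` V) (E - {e})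
            (cmerge s t e \<circ> s) (cmerge s t e \<circ> t) o1 o2"
  let ?s = "cmerge s t e \<circ> s" and ?t = "cmerge s t e \<circ> t"
  define D where "D = {g \<in> E - {e}. o1 g \<noteq> o2 g}"
  have e1: "o1 e" and e2: "o2 e" using e_pos assms by blast+
  have finD: "finite D" using assms(1) D_def unfolding graph_def by auto
  have Dne: "D \<noteq> {}" using assms(10) e1 e2 D_def by auto
  define f where "f = Max D"
  have fD: "f \<in> D" using finD Dne f_def by simp
  have fmax: "\<forall>g\<in>D. g \<le> f" using finD f_def by simp
  have eul1: "\<forall>w\<in>cmerge s t e ` V. card {g\<in>D. ohead ?s ?t o1 g = w} = card {g\<in>D. otail ?s ?t o1 g = w}"
    using eq unfolding eulerian_equiv_def D_def Let_def by blast
  show False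
  proof (cases "o1 f")
    case False
    show False by (rule main[OF assms(1,3,4,5,6,7,8,11,12) e1 e2 D_def fD fmax False eul1])
  next
    case True
    then have o2f: "\<not> o2 f" using fD D_def by auto
    have D2: "D = {g \<in> E - {e}. o2 g \<noteq> o1 g}" using D_def by auto
    have eul2: "\<forall>w\<in>cmerge s t e ` V. card {g\<in>D. ohead ?s ?t o2 g = w} = card {g\<in>D. otail ?s ?t o2 g = w}"
    proof
      fix w assume w: "w \<in> cmerge s t e ` V"
      have a: "{g\<in>D. ohead ?s ?t o2 g = w} = {g\<in>D. otail ?s ?t o1 g = w}"
        using oh_swap[of o1 _ o2] D_def by auto
      have b: "{g\<in>D. otail ?s ?t o2 g = w} = {g\<in>D. ohead ?s ?t o1 g = w}"
        using ot_swap[of o1 _ o2] D_def by auto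
      show "card {g\<in>D. ohead ?s ?t o2 g = w} = card {g\<in>D. otail ?s ?t o2 g = w}"
        unfolding a b using eul1[rule_format, OF w] by (rule sym)
    qed
    show False by (rule main[OF assms(1,3,4,5,8,9,6,12,11) e2 e1 D2 fD fmax o2f eul2])
  qed
qed

end
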